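(* Let $(X_1,\ldots,X_d)$ be a continuous random vector and assume (H1) and (H2) for $(X_1,\ldots,X_d)$ and for all perturbed vectors below. Suppose that for every $k\in\{1,\ldots,d\}$ there is $\epsilon_0>0$ such that for all $|\epsilon|<\epsilon_0$, $\mathbb{E}\big[\sup_{v\in[0,u]}|g_k'(v-(1+\epsilon)X_k)|\big]<\infty$. Then for every $i\in\{1,\ldots,d\}$, $\lim_{\epsilon\to0}A_{X_1,\ldots,X_{i-1},(1+\epsilon)X_i,X_{i+1},\ldots,X_d}(u)=A_{X_1,\ldots,X_d}(u)$.
   Context: For a vector $\mathbf Y=(Y_1,\ldots,Y_d)$ of nonnegative random variables and capital $u\ge0$, $\mathcal{U}^d_u=\{v\in[0,u]^d:\sum_kv_k=u\}$ and $I_{\mathbf Y}(v)=\sum_{k=1}^d\mathbb{E}[g_k(v_k-Y_k)\mathbf 1_{\{Y_k>v_k\}}\mathbf 1_{\{\sum_lY_l\le u\}}]$, with penalty functions $g_k:(-\infty,0]\to[0,\infty)$ that are $C^1$, convex, $g_k(0)=0$ (with $g_k'(x)$ understood as $0$ where the indicator vanishes). (H1): $I_{\mathbf Y}$ has a unique minimizer on $\mathcal{U}^d_u$, denoted $A_{Y_1,\ldots,Y_d}(u)$ (the optimal allocation). (H2): the $g_k$ are differentiable, the relevant $g_k'(v_k-Y_k)$ are integrable, and each $(Y_k,\sum_lY_l)$ has a joint density. *)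

theory Defs
  imports "HOL-Probability.Probability"
begin

text \<open>Components are indexed by a finite type 'd (so d = CARD('d)).
  A random vector is Y :: 'd => 'a => real on a probability space M.\<close>

definition alloc_set :: "real \<Rightarrow> ('d::finite \<Rightarrow> real) set" where
  "alloc_set u = {v. (\<forall>k. 0 \<le> v k \<and> v k \<le> u) \<and> (\<Sum>k\<in>UNIV. v k) = u}"

definition risk_I :: "'a measure \<Rightarrow> ('d::finite \<Rightarrow> real \<Rightarrow> real) \<Rightarrow> ('d \<Rightarrow> 'a \<Rightarrow> real)
    \<Rightarrow> real \<Rightarrow> ('d \<Rightarrow> real) \<Rightarrow> real" where
  "risk_I M g Y u v = (\<Sum>k\<in>UNIV. integral\<^sup>L M (\<lambda>\<omega>.
      g k (v k - Y k \<omega>) * indicator {x. x > v k} (Y k \<omega>)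
        * indicator {x. x \<le> u} (\<Sum>l\<in>UNIV. Y l \<omega>)))"

definition is_opt_alloc :: "'a measure \<Rightarrow> ('d::finite \<Rightarrow> real \<Rightarrow> real) \<Rightarrow> ('d \<Rightarrow> 'a \<Rightarrow> real)
    \<Rightarrow> real \<Rightarrow> ('d \<Rightarrow> real) \<Rightarrow> bool" where
  "is_opt_alloc M g Y u v \<longleftrightarrow> v \<in> alloc_set u \<and> (\<forall>w\<in>alloc_set u. risk_I M g Y u v \<le> risk_I M g Y u w)"

definition H1 :: "'a measure \<Rightarrow> ('d::finite \<Rightarrow> real \<Rightarrow> real) \<Rightarrow> ('d \<Rightarrow> 'a \<Rightarrow> real) \<Rightarrow> real \<Rightarrow> bool" where
  "H1 M g Y u \<longleftrightarrow> (\<exists>!v. is_opt_alloc M g Y u v)"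

definition opt_alloc :: "'a measure \<Rightarrow> ('d::finite \<Rightarrow> real \<Rightarrow> real) \<Rightarrow> ('d \<Rightarrow> 'a \<Rightarrow> real)
    \<Rightarrow> real \<Rightarrow> ('d \<Rightarrow> real)" where
  "opt_alloc M g Y u = (THE v. is_opt_alloc M g Y u v)"

definition H2 :: "'a measure \<Rightarrow> ('d::finite \<Rightarrow> real \<Rightarrow> real) \<Rightarrow> ('d \<Rightarrow> real \<Rightarrow> real)
    \<Rightarrow> ('d \<Rightarrow> 'a \<Rightarrow> real) \<Rightarrow> real \<Rightarrow> bool" where
  "H2 M g g' Y u \<longleftrightarrow>
     (\<forall>k. \<forall>x\<le>0. (g k has_real_derivative g' k x) (at x within {..0})) \<and>
     (\<forall>k. \<forall>v\<in>alloc_set u. integrable M (\<lambda>\<omega>.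
        g' k (v k - Y k \<omega>) * indicator {x. x > v k} (Y k \<omega>)
          * indicator {x. x \<le> u} (\<Sum>l\<in>UNIV. Y l \<omega>))) \<and>
     (\<forall>k. \<exists>f. distributed M (lborel \<Otimes>\<^sub>M lborel) (\<lambda>\<omega>. (Y k \<omega>, \<Sum>l\<in>UNIV. Y l \<omega>)) f)"

definition penalty :: "(real \<Rightarrow> real) \<Rightarrow> (real \<Rightarrow> real) \<Rightarrow> bool" where
  "penalty g g' \<longleftrightarrow> (\<forall>x\<le>0. (g has_real_derivative g' x) (at x within {..0}))
     \<and> continuous_on {..0} g' \<and> convex_on {..0} g \<and> g 0 = 0 \<and> (\<forall>x\<le>0. 0 \<le> g x)"

definition deriv0 :: "(real \<Rightarrow> real) \<Rightarrow> real \<Rightarrow> real" where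
  "deriv0 g' x = (if x \<le> 0 then g' x else 0)"

definition perturb :: "('d \<Rightarrow> 'a \<Rightarrow> real) \<Rightarrow> 'd \<Rightarrow> real \<Rightarrow> ('d \<Rightarrow> 'a \<Rightarrow> real)" where
  "perturb X i \<epsilon> = X(i := (\<lambda>\<omega>. (1 + \<epsilon>) * X i \<omega>))"

end

theory Submission
  imports Defs
begin




lemma risk_eq:
  assumes "\<And>k. g k 0 = 0"
  shows "risk_I M g Y u v = (\<Sum>k\<in>UNIV. integral\<^sup>L M (\<lambda>\<omega>.
      g k (min (v k - Y k \<omega>) 0) * indicator {..u} (\<Sum>l\<in>UNIV. Y l \<omega>)))"
  unfolding risk_I_def
proof (intro sum.cong refl arg_cong[where f="integral\<^sup>L M"] ext)
  fix k \<omega>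
  show "g k (v k - Y k \<omega>) * indicator {x. v k < x} (Y k \<omega>) * indicator {x. x \<le> u} (\<Sum>l\<in>UNIV. Y l \<omega>) =
         g k (min (v k - Y k \<omega>) 0) * indicator {..u} (\<Sum>l\<in>UNIV. Y l \<omega>)"
    using assms[of k] by (auto simp: indicator_def min_def atMost_def)
qed

lemma null_sum:
  fixes Z S :: "'a \<Rightarrow> real"
  assumes "distributed M (lborel \<Otimes>\<^sub>M lborel) (\<lambda>\<omega>. (Z \<omega>, S \<omega>)) f"
  shows "AE \<omega> in M. S \<omega> \<noteq> u"
proof -
  let ?A = "(UNIV::real set) \<times> {u}"
  have An: "?A \<in> null_sets (lborel \<Otimes>\<^sub>M lborel)"
    by (rule lborel.times_in_null_sets2) auto
  have "emeasure M ((\<lambda>\<omega>. (Z \<omega>, S \<omega>)) -` ?A \<inter> space M) = (\<integral>\<^sup>+x. f x * indicator ?A x \<partial>(lborel \<Otimes>\<^sub>M lborel))"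
    using distributed_emeasure[OF assms] An by auto
  also have "\<dots> = 0"
    by (rule nn_integral_null_set[OF An])
  finally have "(\<lambda>\<omega>. (Z \<omega>, S \<omega>)) -` ?A \<inter> space M \<in> null_sets M"
    using distributed_measurable[OF assms] An
    by (auto simp: null_sets_def intro!: measurable_sets)
  from AE_not_in[OF this] AE_space show ?thesis
    by eventually_elim auto
qed

lemma subseq_conv:
  fixes b :: "nat \<Rightarrow> 'x::metric_space"
  assumes "\<And>n. b n \<in> K" "compact K"
    and "\<And>r w. strict_mono r \<Longrightarrow> (b \<circ> r) \<longlonglongrightarrow> w \<Longrightarrow> w \<in> K \<Longrightarrow> w = L"
  shows "b \<longlonglongrightarrow> L"
proof (rule ccontr)
  assume "\<not> b \<longlonglongrightarrow> L"
  then obtain e where e: "e > 0" "\<forall>N. \<exists>n\<ge>N. \<not> dist (b n) L < e"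
    unfolding LIMSEQ_def by auto
  let ?S = "{n. \<not> dist (b n) L < e}"
  have "infinite ?S"
    using e(2) unfolding infinite_nat_iff_unbounded_le by simp
  then obtain r :: "nat \<Rightarrow> nat" where r: "strict_mono r" "\<And>n. r n \<in> ?S"
    using infinite_enumerate by blast
  have "\<forall>n. (b \<circ> r) n \<in> K" using assms(1) by simp
  then obtain w r' where w: "w \<in> K" "strict_mono r'" "((b \<circ> r) \<circ> r') \<longlonglongrightarrow> w"
    using compact_imp_seq_compact[OF assms(2)] unfolding seq_compact_def by blast
  have "w = L"
    using assms(3)[of "r \<circ> r'" w] w r(1) by (simp add: strict_mono_o o_assoc)
  with w(3) obtain N where "\<forall>n\<ge>N. dist (((b \<circ> r) \<circ> r') n) L < e"
    using e(1) unfolding LIMSEQ_def by blast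
  then show False using r(2)[of "r' N"] by auto
qed


lemma joint:
  fixes M :: "'a measure" and X :: "'d::finite \<Rightarrow> 'a \<Rightarrow> real" and g :: "'d \<Rightarrow> real \<Rightarrow> real"
    and e :: "nat \<Rightarrow> real" and a :: "nat \<Rightarrow> 'd \<Rightarrow> real" and w :: "'d \<Rightarrow> real"
  assumes P: "prob_space M" and u: "u \<ge> 0"
    and Xm: "\<And>k. X k \<in> borel_measurable M"
    and Xnn: "\<And>k \<omega>. \<omega> \<in> space M \<Longrightarrow> X k \<omega> \<ge> 0"
    and gc: "\<And>k. continuous_on {..0} (g k)" and g0: "\<And>k. g k 0 = 0"
    and AEu: "AE \<omega> in M. (\<Sum>l\<in>UNIV. X l \<omega>) \<noteq> u"
    and e: "e \<longlonglongrightarrow> 0" "\<And>n. \<bar>e n\<bar> \<le> 1/2"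
    and a: "\<And>n. a n \<in> alloc_set u" "\<And>k. (\<lambda>n. a n k) \<longlonglongrightarrow> w k"
  shows "(\<lambda>n. risk_I M g (perturb X i (e n)) u (a n)) \<longlonglongrightarrow> risk_I M g X u w"
proof -
  interpret prob_space M by fact
  have Y: "\<And>n l \<omega>. perturb X i (e n) l \<omega> = (if l = i then (1 + e n) * X i \<omega> else X l \<omega>)"
    by (simp add: perturb_def)
  have Ym[measurable]: "\<And>n l. perturb X i (e n) l \<in> borel_measurable M"
    using Xm by (simp add: perturb_def)
  have Yc: "(\<lambda>n. perturb X i (e n) l \<omega>) \<longlonglongrightarrow> X l \<omega>" for l \<omega>
  proof -
    have "(\<lambda>n. (1 + e n) * X i \<omega>) \<longlonglongrightarrow> (1 + 0) * X i \<omega>" by (intro tendsto_intros e(1))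
    then show ?thesis by (cases "l = i") (simp_all add: Y)
  qed
  have Sc: "(\<lambda>n. \<Sum>l\<in>UNIV. perturb X i (e n) l \<omega>) \<longlonglongrightarrow> (\<Sum>l\<in>UNIV. X l \<omega>)" for \<omega>
    by (intro tendsto_sum Yc)
  have Ynn: "perturb X i (e n) l \<omega> \<ge> 0" if "\<omega> \<in> space M" for n l \<omega>
  proof -
    have "1 + e n \<ge> 0" using e(2)[of n] by auto
    then show ?thesis using Xnn[OF that] by (simp add: Y)
  qed
  have "(\<lambda>n. \<Sum>k\<in>UNIV. integral\<^sup>L M (\<lambda>\<omega>. g k (min (a n k - perturb X i (e n) k \<omega>) 0) * indicator {..u} (\<Sum>l\<in>UNIV. perturb X i (e n) l \<omega>)))
      \<longlonglongrightarrow> (\<Sum>k\<in>UNIV. integral\<^sup>L M (\<lambda>\<omega>. g k (min (w k - X k \<omega>) 0) * indicator {..u} (\<Sum>l\<in>UNIV. X l \<omega>)))"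
  proof (rule tendsto_sum)
    fix k :: 'd
    define h where "h = (\<lambda>x. g k (min x 0))"
    have eq: "\<And>x. g k (min x 0) = h x" by (simp add: h_def)
    have hc: "continuous_on UNIV h"
      unfolding h_def by (rule continuous_on_compose2[OF gc[of k]]) (auto intro!: continuous_intros)
    have hcont: "isCont h x" for x
      using hc continuous_on_eq_continuous_at[OF open_UNIV] by blast
    have hm[measurable]: "h \<in> borel_measurable borel" by (rule borel_measurable_continuous_onI[OF hc])
    have "bounded (g k ` {-u..0})"
      by (intro compact_imp_bounded compact_continuous_image continuous_on_subset[OF gc]) auto
    then obtain B where B: "\<forall>y\<in>g k ` {-u..0}. norm y \<le> B" by (auto simp: bounded_iff)
    have B0: "B \<ge> 0" using B u by force
    have "(\<lambda>n. integral\<^sup>L M (\<lambda>\<omega>. h (a n k - perturb X i (e n) k \<omega>) * indicator {..u} (\<Sum>l\<in>UNIV. perturb X i (e n) l \<omega>)))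
      \<longlonglongrightarrow> integral\<^sup>L M (\<lambda>\<omega>. h (w k - X k \<omega>) * indicator {..u} (\<Sum>l\<in>UNIV. X l \<omega>))"
    proof (rule integral_dominated_convergence[where w="\<lambda>_. B"])
      show "(\<lambda>\<omega>. h (w k - X k \<omega>) * indicator {..u} (\<Sum>l\<in>UNIV. X l \<omega>)) \<in> borel_measurable M"
        using Xm by measurable
      show "\<And>n. (\<lambda>\<omega>. h (a n k - perturb X i (e n) k \<omega>) * indicator {..u} (\<Sum>l\<in>UNIV. perturb X i (e n) l \<omega>)) \<in> borel_measurable M"
        by measurable
      show "integrable M (\<lambda>_. B)" by simp
      show "AE \<omega> in M. (\<lambda>n. h (a n k - perturb X i (e n) k \<omega>) * indicator {..u} (\<Sum>l\<in>UNIV. perturb X i (e n) l \<omega>))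
          \<longlonglongrightarrow> h (w k - X k \<omega>) * indicator {..u} (\<Sum>l\<in>UNIV. X l \<omega>)"
        using AEu
      proof eventually_elim
        case (elim \<omega>)
        have 1: "(\<lambda>n. h (a n k - perturb X i (e n) k \<omega>)) \<longlonglongrightarrow> h (w k - X k \<omega>)"
          by (rule isCont_tendsto_compose[where g=h]) (auto intro!: tendsto_intros a(2) Yc hcont)
        have "\<forall>\<^sub>F n in sequentially. indicator {..u} (\<Sum>l\<in>UNIV. perturb X i (e n) l \<omega>) = (indicator {..u} (\<Sum>l\<in>UNIV. X l \<omega>) :: real)"
        proof (cases "(\<Sum>l\<in>UNIV. X l \<omega>) < u")
          case True
          from order_tendstoD(2)[OF Sc True] show ?thesis
            by (rule eventually_mono) (use True in \<open>auto simp: indicator_def\<close>)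
        next
          case False
          then have F: "(\<Sum>l\<in>UNIV. X l \<omega>) > u" using elim by auto
          from order_tendstoD(1)[OF Sc F] show ?thesis
            by (rule eventually_mono) (use F in \<open>auto simp: indicator_def\<close>)
        qed
        then have 2: "(\<lambda>n. indicator {..u} (\<Sum>l\<in>UNIV. perturb X i (e n) l \<omega>)) \<longlonglongrightarrow> (indicator {..u} (\<Sum>l\<in>UNIV. X l \<omega>) :: real)"
          by (rule tendsto_eventually)
        show ?case by (rule tendsto_mult[OF 1 2])
      qed
      show "AE \<omega> in M. norm (h (a n k - perturb X i (e n) k \<omega>) * indicator {..u} (\<Sum>l\<in>UNIV. perturb X i (e n) l \<omega>)) \<le> B" for n
        using AE_space
      proof eventually_elim
        case (elim \<omega>)
        show ?case
        proof (cases "(\<Sum>l\<in>UNIV. perturb X i (e n) l \<omega>) \<le> u")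
          case True
          have "perturb X i (e n) k \<omega> \<le> (\<Sum>l\<in>UNIV. perturb X i (e n) l \<omega>)"
            by (rule member_le_sum) (auto intro: Ynn elim)
          moreover have "a n k \<ge> 0" using a(1)[of n] by (auto simp: alloc_set_def)
          ultimately have "min (a n k - perturb X i (e n) k \<omega>) 0 \<in> {-u..0}" using True u by auto
          then have "norm (h (a n k - perturb X i (e n) k \<omega>)) \<le> B" using B by (auto simp: h_def)
          then show ?thesis using True by (simp add: indicator_def)
        next
          case False
          then show ?thesis using B0 by (simp add: indicator_def)
        qed
      qed
    qed
    then show "(\<lambda>n. integral\<^sup>L M (\<lambda>\<omega>. g k (min (a n k - perturb X i (e n) k \<omega>) 0) * indicator {..u} (\<Sum>l\<in>UNIV. perturb X i (e n) l \<omega>)))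
      \<longlonglongrightarrow> integral\<^sup>L M (\<lambda>\<omega>. g k (min (w k - X k \<omega>) 0) * indicator {..u} (\<Sum>l\<in>UNIV. X l \<omega>))"
      by (simp only: eq)
  qed
  then show ?thesis by (simp only: risk_eq[of g, OF g0])
qed

theorem mainTheorem7:
  fixes M :: "'a measure" and X :: "'d::finite \<Rightarrow> 'a \<Rightarrow> real"
    and g g' :: "'d \<Rightarrow> real \<Rightarrow> real" and u :: real
  assumes "prob_space M"
    and "u \<ge> 0"
    and "\<And>k. X k \<in> borel_measurable M"
    and "\<And>k \<omega>. \<omega> \<in> space M \<Longrightarrow> X k \<omega> \<ge> 0"
    and "\<exists>f. distributed M lborel (\<lambda>\<omega>. \<chi> k. X k \<omega>) f"
    and "\<And>k. penalty (g k) (g' k)"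
    and "H1 M g X u" and "H2 M g g' X u"
    and "\<And>i. \<forall>\<^sub>F \<epsilon> in at 0. H1 M g (perturb X i \<epsilon>) u \<and> H2 M g g' (perturb X i \<epsilon>) u"
    and "\<And>k. \<exists>\<epsilon>0>0. \<forall>\<epsilon>. \<bar>\<epsilon>\<bar> < \<epsilon>0 \<longrightarrow>
           (\<integral>\<^sup>+\<omega>. ennreal (SUP v\<in>{0..u}. \<bar>deriv0 (g' k) (v - (1 + \<epsilon>) * X k \<omega>)\<bar>) \<partial>M) < \<infinity>"
  shows "\<forall>i k. ((\<lambda>\<epsilon>. opt_alloc M g (perturb X i \<epsilon>) u k) \<longlongrightarrow> opt_alloc M g X u k) (at 0)"
proof -
  have gc: "continuous_on {..0} (g k)" and g0: "g k 0 = 0" for k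
  proof -
    have "\<forall>x\<le>0. (g k has_real_derivative g' k x) (at x within {..0})" and "g k 0 = 0"
      using assms(6)[of k] unfolding penalty_def by auto
    then show "continuous_on {..0} (g k)" "g k 0 = 0"
      by (auto intro!: DERIV_continuous_on)
  qed
  obtain k0 :: 'd where True by simp
  from assms(8) obtain f where "distributed M (lborel \<Otimes>\<^sub>M lborel) (\<lambda>\<omega>. (X k0 \<omega>, \<Sum>l\<in>UNIV. X l \<omega>)) f"
    unfolding H2_def by blast
  then have AEu: "AE \<omega> in M. (\<Sum>l\<in>UNIV. X l \<omega>) \<noteq> u" by (rule null_sum)
  have opt0: "is_opt_alloc M g X u (opt_alloc M g X u)"
    using assms(7) unfolding H1_def opt_alloc_def by (rule theI')
  have uniq0: "v = opt_alloc M g X u" if "is_opt_alloc M g X u v" for v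
    using assms(7) that unfolding H1_def opt_alloc_def by (metis the1_equality)
  show ?thesis
  proof (intro allI)
    fix i k
    obtain d where d: "d > 0" "\<And>\<epsilon>. \<epsilon> \<noteq> 0 \<Longrightarrow> \<bar>\<epsilon>\<bar> < d \<Longrightarrow> H1 M g (perturb X i \<epsilon>) u"
      using assms(9)[of i] unfolding eventually_at by (auto simp: dist_real_def)
    define T where "T = ball (0::real) (min d (1/2))"
    have T0: "(0::real) \<in> T" "open T" using d(1) by (auto simp: T_def)
    have atT: "at (0::real) = at 0 within T" by (rule at_within_open[OF T0, symmetric])
    show "((\<lambda>\<epsilon>. opt_alloc M g (perturb X i \<epsilon>) u k) \<longlongrightarrow> opt_alloc M g X u k) (at 0)"
      unfolding atT tendsto_at_iff_sequentially
    proof (intro allI impI)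
      fix e :: "nat \<Rightarrow> real" assume e: "\<forall>n. e n \<in> T - {0}" "e \<longlonglongrightarrow> 0"
      have eb: "\<bar>e n\<bar> \<le> 1/2" and eH: "H1 M g (perturb X i (e n)) u" for n
        using spec[OF e(1), of n] d(2)[of "e n"] by (auto simp: T_def)
      define a where "a n = opt_alloc M g (perturb X i (e n)) u" for n
      have opt: "is_opt_alloc M g (perturb X i (e n)) u (a n)" for n
        using eH[of n] unfolding H1_def opt_alloc_def a_def by (rule theI')
      define b :: "nat \<Rightarrow> real^'d" where "b n = (\<chi> j. a n j)" for n
      define K :: "(real^'d) set" where "K = {x. (\<forall>j. 0 \<le> x$j \<and> x$j \<le> u) \<and> (\<Sum>j\<in>UNIV. x$j) = u}"
      have bK: "b n \<in> K" for n
        using opt[of n] by (simp add: b_def K_def is_opt_alloc_def alloc_set_def)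
      have "closed K" unfolding K_def
        by (intro closed_Collect_conj closed_Collect_all closed_Collect_le closed_Collect_eq continuous_intros)
      moreover have "bounded K"
        by (rule bounded_subset[OF bounded_cbox[of 0 "\<chi> _. u"]]) (auto simp: K_def mem_box_cart)
      ultimately have cK: "compact K" by (simp add: compact_eq_bounded_closed)
      have "b \<longlonglongrightarrow> (\<chi> j. opt_alloc M g X u j)"
      proof (rule subseq_conv[OF bK cK])
        fix r wv assume r: "strict_mono r" "(b \<circ> r) \<longlonglongrightarrow> wv" "wv \<in> K"
        define w where "w j = wv $ j" for j
        have wA: "w \<in> alloc_set u" using r(3) by (simp add: K_def alloc_set_def w_def)
        have wc: "(\<lambda>n. a (r n) j) \<longlonglongrightarrow> w j" for j
          using tendsto_vec_nth[OF r(2), of j] by (simp add: b_def w_def o_def)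
        have ear: "(\<lambda>n. e (r n)) \<longlonglongrightarrow> 0" using LIMSEQ_subseq_LIMSEQ[OF e(2) r(1)] by (simp add: o_def)
        have ebr: "\<bar>e (r n)\<bar> \<le> 1/2" for n by (rule eb)
        have aA: "a (r n) \<in> alloc_set u" for n using opt[of "r n"] by (simp add: is_opt_alloc_def)
        have L1: "(\<lambda>n. risk_I M g (perturb X i (e (r n))) u (a (r n))) \<longlonglongrightarrow> risk_I M g X u w"
          by (rule joint[where e="\<lambda>n. e (r n)" and a="\<lambda>n. a (r n)" and w=w and i=i, OF assms(1) assms(2) assms(3) assms(4) gc g0 AEu ear ebr aA wc])
        have "is_opt_alloc M g X u w"
          unfolding is_opt_alloc_def
        proof (intro conjI ballI wA)
          fix v :: "'d \<Rightarrow> real" assume v: "v \<in> alloc_set u"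
          have L2: "(\<lambda>n. risk_I M g (perturb X i (e (r n))) u v) \<longlonglongrightarrow> risk_I M g X u v"
            by (rule joint[where e="\<lambda>n. e (r n)" and a="\<lambda>n. v" and w=v and i=i, OF assms(1) assms(2) assms(3) assms(4) gc g0 AEu ear ebr v tendsto_const])
          show "risk_I M g X u w \<le> risk_I M g X u v"
            by (rule LIMSEQ_le[OF L1 L2]) (use opt v in \<open>auto simp: is_opt_alloc_def\<close>)
        qed
        then have "w = opt_alloc M g X u" by (rule uniq0)
        then show "wv = (\<chi> j. opt_alloc M g X u j)"
          by (auto simp: vec_eq_iff w_def[symmetric])
      qed
      from tendsto_vec_nth[OF this, of k]
      show "((\<lambda>\<epsilon>. opt_alloc M g (perturb X i \<epsilon>) u k) \<circ> e) \<longlonglongrightarrow> opt_alloc M g X u k"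
        by (simp add: b_def a_def o_def)
    qed
  qed
qed


end
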